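(* Let $n\ge0$ and $w,u\in S_n$. Assume that the compositions $\beta=(\beta_1,\dots,\beta_p):=\operatorname{cLRM}'(w)$ and $\gamma=(\gamma_1,\dots,\gamma_p):=\operatorname{cLRM}'(u)$ are anagrams of one another, and let $\chi\in S_p$ satisfy $\beta_{\chi(i)}=\gamma_i$ for each $i\in[p]$. Let $v\in S_n$ be a permutation that sends each $\operatorname{Set}(\gamma)_i$ to $\operatorname{Set}(\beta)_{\chi(i)}$ and has V-shape on each $\operatorname{Set}(\gamma)_i$ (equivalently, the word $\underline{v(1)}\,\underline{v(2)}\cdots\underline{v(n)}$ appears in the expansion of the product $V^{\operatorname{Set}(\beta)_{\chi(1)}}\cdots V^{\operatorname{Set}(\beta)_{\chi(p)}}$ in the free algebra). Assume that $vu=w$. Then $\chi=\mathrm{id}$, $v=\mathrm{id}$ and $\gamma=\beta$.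
   Context: $S_n$ is the symmetric group on $[n]$, with product $(uw)(i)=u(w(i))$. $\operatorname{LRM}(w)=\{i\in[n]: w(k)>i\text{ for all }k<w^{-1}(i)\}$ (left-to-right minima), $\operatorname{LRM}'(w)=\{\ell-1:\ell\in\operatorname{LRM}(w),\ \ell>1\}\subseteq[n-1]$, and $\operatorname{cLRM}'(w)=\operatorname{Comp}(\operatorname{LRM}'(w))$, where for $I=\{i_1<\cdots<i_{p-1}\}\subseteq[n-1]$, $\operatorname{Comp}(I)=(i_1-i_0,\dots,i_p-i_{p-1})$ with $i_0=0$, $i_p=n$. Compositions are anagrams if they have the same multiset of parts. For a composition $\alpha=(\alpha_1,\dots,\alpha_p)$ of $n$, $\alpha_{\le i}=\alpha_1+\cdots+\alpha_i$ and $\operatorname{Set}(\alpha)_i=\{\alpha_{\le i-1}+1,\dots,\alpha_{\le i}\}$. A permutation $v$ has V-shape on an interval $\{i,i+1,\dots,j\}$ if there is $m$ with $i\le m\le j$ and $v(i)>v(i+1)>\cdots>v(m)<v(m+1)<\cdots<v(j)$. In the free algebra over letters $\underline1,\dots,\underline n$, $[a,b]=ab-ba$ and for nonempty $S\subseteq[n]$ with elements $s_1<\cdots<s_k$, $V^S=[[\cdots[\underline{s_1},\underline{s_2}],\dots],\underline{s_k}]$. *)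

theory Defs
  imports "HOL-Combinatorics.Permutations"
begin

text \<open>Permutations of [n] are functions nat => nat with w permutes {1..n};
  the product (uw)(i) = u(w(i)) is function composition u o w.
  Compositions are lists of naturals, indexed from 1.\<close>

definition LRM :: "nat \<Rightarrow> (nat \<Rightarrow> nat) \<Rightarrow> nat set" where
  "LRM n w = {i \<in> {1..n}. \<forall>k \<in> {1..<inv w i}. w k > i}"

definition LRM' :: "nat \<Rightarrow> (nat \<Rightarrow> nat) \<Rightarrow> nat set" where
  "LRM' n w = {l - 1 | l. l \<in> LRM n w \<and> l > 1}"

definition Comp :: "nat \<Rightarrow> nat set \<Rightarrow> nat list" where
  "Comp n I = (let xs = sorted_list_of_set I in map2 (-) (xs @ [n]) (0 # xs))"

definition cLRM' :: "nat \<Rightarrow> (nat \<Rightarrow> nat) \<Rightarrow> nat list" where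
  "cLRM' n w = Comp n (LRM' n w)"

definition part :: "nat list \<Rightarrow> nat \<Rightarrow> nat" where
  "part \<alpha> i = \<alpha> ! (i - 1)"

definition psum :: "nat list \<Rightarrow> nat \<Rightarrow> nat" where
  "psum \<alpha> i = sum_list (take i \<alpha>)"

definition SetC :: "nat list \<Rightarrow> nat \<Rightarrow> nat set" where
  "SetC \<alpha> i = {psum \<alpha> (i - 1) + 1 .. psum \<alpha> i}"

definition vshape :: "(nat \<Rightarrow> nat) \<Rightarrow> nat \<Rightarrow> nat \<Rightarrow> bool" where
  "vshape v i j = (\<exists>m. i \<le> m \<and> m \<le> j \<and>
      (\<forall>k. i \<le> k \<and> k < m \<longrightarrow> v k > v (k + 1)) \<and>
      (\<forall>k. m \<le> k \<and> k < j \<longrightarrow> v k < v (k + 1)))"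

end

theory Submission
  imports Defs
begin


lemma sorted_less_iff:
  assumes "sorted_wrt (<) (Z::nat list)" "i < length Z" "j < length Z"
  shows "Z!i < Z!j \<longleftrightarrow> i < j"
  using sorted_wrt_nth_less[OF assms(1)] assms
  by (metis less_asym' linorder_neqE_nat)

lemma Comp_psum:
  assumes fin: "finite I" and sub: "I \<subseteq> {1..<n}" and npos: "0 < n"
  defines "Z \<equiv> 0 # sorted_list_of_set I @ [n]"
  shows "length (Comp n I) = card I + 1"
    and "sorted_wrt (<) Z"
    and "\<forall>j \<le> card I + 1. psum (Comp n I) j = Z ! j"
proof -
  let ?xs = "sorted_list_of_set I"
  have lx: "length ?xs = card I" by simp
  show len: "length (Comp n I) = card I + 1"
    unfolding Comp_def by (simp add: Let_def)
  have sx: "sorted_wrt (<) ?xs" by (simp add: strict_sorted_list_of_set)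
  have setx: "set ?xs = I" using fin by simp
  show sZ: "sorted_wrt (<) Z"
    unfolding Z_def using sx setx sub npos
    by (auto simp: sorted_wrt_append)
  have lZ: "length Z = card I + 2" unfolding Z_def by simp
  have nth: "Comp n I ! k = Z ! (Suc k) - Z ! k" if "k < card I + 1" for k
  proof -
    have "Comp n I ! k = (?xs @ [n]) ! k - (0 # ?xs) ! k"
      unfolding Comp_def Let_def using that lx by simp
    moreover have "(?xs @ [n]) ! k = Z ! Suc k" unfolding Z_def by simp
    moreover have "(0 # ?xs) ! k = Z ! k"
      unfolding Z_def using that lx
      by (metis append_Cons length_Cons less_Suc_eq_le nth_append not_le Suc_eq_plus1)
    ultimately show ?thesis by simp
  qed
  show "\<forall>j \<le> card I + 1. psum (Comp n I) j = Z ! j"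
  proof (intro allI impI)
    fix j assume "j \<le> card I + 1"
    then show "psum (Comp n I) j = Z ! j"
    proof (induction j)
      case 0 then show ?case by (simp add: psum_def Z_def)
    next
      case (Suc j)
      then have jl: "j < length (Comp n I)" using len by simp
      have "psum (Comp n I) (Suc j) = psum (Comp n I) j + Comp n I ! j"
        unfolding psum_def using jl by (simp add: take_Suc_conv_app_nth)
      also have "\<dots> = Z ! j + (Z ! Suc j - Z ! j)" using Suc nth by simp
      also have "\<dots> = Z ! Suc j"
        using sorted_wrt_nth_less[OF sZ, of j "Suc j"] Suc lZ by simp
      finally show ?case .
    qed
  qed
qed

lemma one_LRM:
  assumes x: "x permutes {1..n}" and n: "1 \<le> n"
  shows "1 \<in> LRM n x"
proof -
  have "x k > 1" if "k \<in> {1..<inv x 1}" for k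
  proof -
    have i1: "inv x 1 \<in> {1..n}" using permutes_in_image[OF permutes_inv[OF x]] n by simp
    then have "k \<in> {1..n}" using that by auto
    then have "x k \<in> {1..n}" using permutes_in_image[OF x] by simp
    moreover have "x k \<noteq> 1" using that permutes_inverses[OF x] by (metis atLeastLessThan_iff less_irrefl)
    ultimately show ?thesis by auto
  qed
  then show ?thesis unfolding LRM_def using n by auto
qed

lemma perm_blocks:
  assumes x: "x permutes {1..n}" and n: "1 \<le> n"
  defines "\<alpha> \<equiv> cLRM' n x"
  shows "1 \<le> length \<alpha> \<and> psum \<alpha> 0 = 0 \<and> psum \<alpha> (length \<alpha>) = n
    \<and> (\<forall>i j. i < j \<and> j \<le> length \<alpha> \<longrightarrow> psum \<alpha> i < psum \<alpha> j)
    \<and> (\<forall>i\<in>{1..length \<alpha>}. \<forall>k. 1 \<le> k \<and> k < inv x (psum \<alpha> (i-1)+1) \<longrightarrow> psum \<alpha> i < x k)"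
proof -
  define I where "I = LRM' n x"
  have sub: "I \<subseteq> {1..<n}" unfolding I_def LRM'_def LRM_def by auto
  have fin: "finite I" using sub finite_subset by blast
  define Z where "Z = 0 # sorted_list_of_set I @ [n]"
  have n0: "0 < n" using n by simp
  note C = Comp_psum[OF fin sub n0, folded Z_def]
  have aC: "\<alpha> = Comp n I" unfolding \<alpha>_def cLRM'_def I_def ..
  have len: "length \<alpha> = card I + 1" using C(1) aC by simp
  have lZ: "length Z = card I + 2" unfolding Z_def using fin by simp
  have sZ: "sorted_wrt (<) Z" by (rule C(2))
  have P: "psum \<alpha> j = Z ! j" if "j \<le> length \<alpha>" for j using C(3) aC len that by simp
  have Z0: "Z ! 0 = 0" unfolding Z_def by simp
  have Zl: "Z ! (card I + 1) = n" unfolding Z_def using fin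
    by (simp add: nth_append)
  have setZ: "set Z = insert 0 (insert n I)" unfolding Z_def using fin by auto
  have mono: "psum \<alpha> i < psum \<alpha> j" if "i < j" "j \<le> length \<alpha>" for i j
    using that P sorted_wrt_nth_less[OF sZ, of i j] len lZ by simp
  have Zle: "Z ! i \<le> n" if "i \<le> length \<alpha>" for i
    using mono[of i "length \<alpha>"] that P len Zl by (cases "i = length \<alpha>") auto
  have main: "psum \<alpha> i < x k" if i: "i\<in>{1..length \<alpha>}" and k: "1 \<le> k" "k < inv x (psum \<alpha> (i-1)+1)" for i k
  proof -
    define a where "a = Z ! (i - 1) + 1"
    have Pa: "psum \<alpha> (i-1) + 1 = a" using P[of "i-1"] i unfolding a_def by force
    note k = k[unfolded Pa]
    have aLRM: "a \<in> LRM n x"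
    proof (cases "i = 1")
      case True
      then show ?thesis using one_LRM[OF x n] Z0 a_def by simp
    next
      case False
      then have "Z ! (i-1) \<in> I"
        using i unfolding Z_def using fin
        by (auto simp: nth_Cons' nth_append len)
          (metis length_sorted_list_of_set nth_mem set_sorted_list_of_set)
      then obtain l where "Z ! (i-1) = l - 1" "l \<in> LRM n x" "l > 1"
        unfolding I_def LRM'_def by auto
      then show ?thesis unfolding a_def by simp
    qed
    have an: "a \<in> {1..n}" using aLRM unfolding LRM_def by auto
    have ia: "inv x a \<in> {1..n}" using permutes_in_image[OF permutes_inv[OF x]] an by simp
    show ?thesis
    proof (rule ccontr)
      assume "\<not> psum \<alpha> i < x k"
      then have xk: "x k \<le> Z ! i" using P i by simp
      define K where "K = {1..k}"
      define c where "c = Min (x ` K)"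
      have Kne: "K \<noteq> {}" "finite K" using k unfolding K_def by auto
      have "c \<in> x ` K" unfolding c_def using Kne by simp
      then obtain k' where k': "k' \<in> K" "x k' = c" by auto
      have ck: "c \<le> x k" unfolding c_def using Kne k K_def by simp
      have k'n: "k' \<in> {1..n}" using k' k ia unfolding K_def by auto
      have cn: "c \<in> {1..n}" using k'n k' permutes_in_image[OF x] by auto
      have aless: "x j > a" if "j \<in> {1..<inv x a}" for j
        using aLRM that unfolding LRM_def by auto
      have ca: "c > a" using aless[of k'] k' k unfolding K_def by auto
      have icc: "inv x c = k'" using k' permutes_inverses[OF x] by metis
      have cLRM: "c \<in> LRM n x"
      proof -
        have "x j > c" if "j \<in> {1..<k'}" for j
        proof -
          have "j \<in> K" using that k' unfolding K_def by auto
          then have "c \<le> x j" unfolding c_def using Kne by simp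
          moreover have "x j \<noteq> c" using that k' permutes_inj[OF x]
            by (metis atLeastLessThan_iff inj_eq less_irrefl)
          ultimately show ?thesis by simp
        qed
        then show ?thesis unfolding LRM_def using cn icc by auto
      qed
      have "c - 1 \<in> I" proof -
        have "1 < c" using ca an by auto
        then show ?thesis unfolding I_def LRM'_def using cLRM by blast
      qed
      then have "c - 1 \<in> set Z" using setZ by auto
      then obtain j where j: "j < length Z" "Z ! j = c - 1" by (auto simp: in_set_conv_nth)
      have il: "i < length Z" "i - 1 < length Z" using i len lZ by auto
      have "Z ! (i-1) < Z ! j" using ca j a_def by simp
      then have "i - 1 < j" using sorted_less_iff[OF sZ il(2) j(1)] by simp
      moreover have "Z ! j < Z ! i" using j ck xk ca by simp
      then have "j < i" using sorted_less_iff[OF sZ j(1) il(1)] by simp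
      ultimately show False by simp
    qed
  qed
  show ?thesis
    using len P[of 0] Z0 P[of "length \<alpha>"] Zl mono main by auto
qed

lemma P_mono:
  assumes "\<forall>i j. i < j \<and> j \<le> p \<longrightarrow> (P::nat\<Rightarrow>nat) i < P j" "i \<le> j" "j \<le> p"
  shows "P i \<le> P j"
proof (cases "i = j")
  case False
  then show ?thesis using assms(1) assms(2,3) by (simp add: less_imp_le)
qed simp

lemma block_cover:
  fixes P :: "nat \<Rightarrow> nat" and p n y :: nat
  assumes P0: "P 0 = 0" and Pp: "P p = (n::nat)" and st: "\<forall>i j. i < j \<and> j \<le> p \<longrightarrow> P i < P j"
    and y: "y \<in> {1..n}"
  shows "\<exists>i\<in>{1..p}. y \<in> {P (i-1)+1..P i}"
proof -
  define i where "i = (LEAST j. y \<le> P j)"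
  have ex: "y \<le> P p" using y Pp by simp
  have yi: "y \<le> P i" unfolding i_def using ex by (rule LeastI[of _ p])
  have ip: "i \<le> p" unfolding i_def using ex by (rule Least_le)
  have i0: "i \<noteq> 0" using yi P0 y by (metis atLeastAtMost_iff not_one_le_zero le_zero_eq)
  have "\<not> y \<le> P (i - 1)" unfolding i_def
    using not_less_Least[of "i - 1" "\<lambda>j. y \<le> P j"] i0 i_def by simp
  then show ?thesis using yi ip i0 by (intro bexI[of _ i]) auto
qed

lemma block_disj:
  assumes st: "\<forall>i j. i < j \<and> j \<le> p \<longrightarrow> (P::nat\<Rightarrow>nat) i < P j"
    and ij: "i \<in> {1..p}" "j \<in> {1..p}" "i \<noteq> j"
    and y: "y \<in> {P (i-1)+1..P i}" "y \<in> {P (j-1)+1..P j}"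
  shows False
proof (cases "i < j")
  case True
  then have "P i \<le> P (j - 1)" using P_mono[OF st, of i "j-1"] ij by auto
  then show False using y by auto
next
  case False
  then have "j < i" using ij by simp
  then have "P j \<le> P (i - 1)" using P_mono[OF st, of j "i-1"] ij by auto
  then show False using y by auto
qed

lemma first_pos:
  fixes x P :: "nat \<Rightarrow> nat"
  assumes x: "x permutes {1..n}"
    and P0: "P 0 = 0" and Pp: "P p = n" and st: "\<forall>i j. i < j \<and> j \<le> p \<longrightarrow> P i < P j"
    and main: "\<forall>i\<in>{1..p}. \<forall>k. 1 \<le> k \<and> k < inv x (P (i-1)+1) \<longrightarrow> P i < x k"
  shows "\<forall>i\<in>{1..p}. inv x (P (i-1)+1) \<in> {1..n} \<and> x (inv x (P (i-1)+1)) = P (i-1)+1"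
    and "\<forall>i\<in>{1..p}. \<forall>j\<in>{1..p}. i < j \<longrightarrow> inv x (P (j-1)+1) < inv x (P (i-1)+1)"
proof -
  have inn: "P (i-1)+1 \<in> {1..n}" if "i \<in> {1..p}" for i
    using st[rule_format, of "i-1" i] P_mono[OF st, of i p] that Pp by auto
  show A: "\<forall>i\<in>{1..p}. inv x (P (i-1)+1) \<in> {1..n} \<and> x (inv x (P (i-1)+1)) = P (i-1)+1"
    using inn permutes_in_image[OF permutes_inv[OF x]] permutes_inverses[OF x] by auto
  show "\<forall>i\<in>{1..p}. \<forall>j\<in>{1..p}. i < j \<longrightarrow> inv x (P (j-1)+1) < inv x (P (i-1)+1)"
  proof (intro ballI impI)
    fix i j assume i: "i \<in> {1..p}" and j: "j \<in> {1..p}" and ij: "i < j"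
    have ne: "inv x (P (j-1)+1) \<noteq> inv x (P (i-1)+1)"
    proof
      assume "inv x (P (j-1)+1) = inv x (P (i-1)+1)"
      then have "x (inv x (P (j-1)+1)) = x (inv x (P (i-1)+1))" by simp
      then have "P (j-1) = P (i-1)" using A i j by simp
      moreover have "i - 1 < j - 1 \<and> j - 1 \<le> p" using ij i j by auto
      then have "P (i-1) < P (j-1)" using st by blast
      ultimately show False by simp
    qed
    show "inv x (P (j-1)+1) < inv x (P (i-1)+1)"
    proof (rule ccontr)
      assume "\<not> ?thesis"
      then have lt: "inv x (P (i-1)+1) < inv x (P (j-1)+1)" using ne by simp
      have "P j < x (inv x (P (i-1)+1))"
        using main[rule_format, OF j, of "inv x (P (i-1)+1)"] lt A i by auto
      then have "P j < P (i-1) + 1" using A i by simp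
      moreover have "P (i-1) < P j" using st ij j by auto
      ultimately show False by simp
    qed
  qed
qed

lemma vshape_id:
  assumes vs: "vshape v a b" and ab: "a \<le> b" and img: "v ` {a..b} = {a..b}" and va: "v a = a"
  shows "\<forall>y\<in>{a..b}. v y = y"
proof -
  obtain m where m: "a \<le> m" "m \<le> b" "\<forall>k. a \<le> k \<and> k < m \<longrightarrow> v k > v (k + 1)"
    "\<forall>k. m \<le> k \<and> k < b \<longrightarrow> v k < v (k + 1)" using vs unfolding vshape_def by blast
  have inab: "v y \<in> {a..b}" if "y \<in> {a..b}" for y using img that by blast
  have "m = a"
  proof (rule ccontr)
    assume "m \<noteq> a"
    then have "v a > v (a+1)" using m by auto
    moreover have "v (a+1) \<ge> a" using inab[of "a+1"] m \<open>m \<noteq> a\<close> by auto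
    ultimately show False using va by simp
  qed
  then have inc: "\<forall>k. a \<le> k \<and> k < b \<longrightarrow> v k < v (k + 1)" using m by simp
  have up: "a + d \<le> b \<longrightarrow> a + d \<le> v (a + d)" for d
  proof (induction d)
    case 0 then show ?case using va by simp
  next
    case (Suc d) then show ?case using inc[rule_format, of "a + d"] by auto
  qed
  have down: "d \<le> b - a \<longrightarrow> v (b - d) \<le> b - d" for d
  proof (induction d)
    case 0 then show ?case using inab[of b] ab by simp
  next
    case (Suc d)
    show ?case
    proof
      assume "Suc d \<le> b - a"
      then have "v (b - Suc d) < v (b - Suc d + 1)" using inc by auto
      moreover have "b - Suc d + 1 = b - d" using \<open>Suc d \<le> b - a\<close> by simp
      ultimately show "v (b - Suc d) \<le> b - Suc d" using Suc \<open>Suc d \<le> b - a\<close> by simp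
    qed
  qed
  show ?thesis
  proof
    fix y assume y: "y \<in> {a..b}"
    have "y \<le> v y" using up[of "y - a"] y by auto
    moreover have "v y \<le> y" using down[of "b - y"] y by auto
    ultimately show "v y = y" by simp
  qed
qed


lemma mono_perm_id:
  assumes chi: "\<chi> permutes {1..(p::nat)}"
    and inc: "\<forall>i\<in>{1..p}. \<forall>j\<in>{1..p}. i < j \<longrightarrow> \<chi> i < \<chi> j"
  shows "\<chi> = id"
proof
  fix i
  show "\<chi> i = id i"
  proof (cases "i \<in> {1..p}")
    case False then show ?thesis using permutes_not_in[OF chi] by simp
  next
    case True
    have injc: "inj_on \<chi> X" for X by (meson permutes_inj[OF chi] inj_on_subset subset_UNIV)
    have le: "\<chi> j \<le> \<chi> i" if "j \<in> {1..p}" "j \<le> i" for j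
    proof (cases "j = i")
      case False
      then have "j < i" using that by simp
      then show ?thesis using inc that(1) True by (meson less_imp_le)
    qed simp
    have ge: "\<chi> i \<le> \<chi> j" if "j \<in> {1..p}" "i \<le> j" for j
    proof (cases "j = i")
      case False
      then have "i < j" using that by simp
      then show ?thesis using inc that(1) True by (meson less_imp_le)
    qed simp
    have inp: "\<chi> j \<in> {1..p}" if "j \<in> {1..p}" for j using permutes_in_image[OF chi] that by simp
    have s1: "\<chi> ` {1..i} \<subseteq> {1..\<chi> i}"
    proof
      fix z assume "z \<in> \<chi> ` {1..i}"
      then obtain j where "j \<in> {1..i}" "z = \<chi> j" by blast
      then show "z \<in> {1..\<chi> i}" using le[of j] inp[of j] True by auto
    qed
    have s2: "\<chi> ` {i..p} \<subseteq> {\<chi> i..p}"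
    proof
      fix z assume "z \<in> \<chi> ` {i..p}"
      then obtain j where "j \<in> {i..p}" "z = \<chi> j" by blast
      then show "z \<in> {\<chi> i..p}" using ge[of j] inp[of j] True by auto
    qed
    have "card (\<chi> ` {1..i}) \<le> card {1..\<chi> i}" using s1 by (intro card_mono) auto
    then have a: "i \<le> \<chi> i" using card_image[OF injc] by simp
    have "card (\<chi> ` {i..p}) \<le> card {\<chi> i..p}" using s2 by (intro card_mono) auto
    then have b: "Suc p - i \<le> Suc p - \<chi> i" using card_image[OF injc] by simp
    show ?thesis using a b True inp[OF True] by simp
  qed
qed

theorem lemma5p2:
  fixes n :: nat and w u v \<chi> :: "nat \<Rightarrow> nat" and \<beta> \<gamma> :: "nat list"
  assumes w: "w permutes {1..n}" and u: "u permutes {1..n}" and v: "v permutes {1..n}"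
    and \<beta>: "\<beta> = cLRM' n w" and \<gamma>: "\<gamma> = cLRM' n u"
    and anagram: "mset \<beta> = mset \<gamma>"
    and \<chi>: "\<chi> permutes {1..length \<beta>}"
    and \<chi>_part: "\<forall>i \<in> {1..length \<beta>}. part \<beta> (\<chi> i) = part \<gamma> i"
    and v_blocks: "\<forall>i \<in> {1..length \<beta>}. v ` SetC \<gamma> i = SetC \<beta> (\<chi> i)"
    and v_vshape: "\<forall>i \<in> {1..length \<beta>}. vshape v (psum \<gamma> (i - 1) + 1) (psum \<gamma> i)"
    and prod: "v \<circ> u = w"
  shows "\<chi> = id \<and> v = id \<and> \<gamma> = \<beta>"
proof (cases "n = 0")
  case True
  have v0: "v = id" using v True by simp
  have L: "LRM' n x = {}" for x using True unfolding LRM'_def LRM_def by auto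
  have b0: "\<beta> = [0]" "\<gamma> = [0]" using \<beta> \<gamma> L True unfolding cLRM'_def Comp_def by auto
  have c0: "\<chi> = id" using \<chi> b0 by simp
  show ?thesis using v0 b0 c0 by simp
next
  case False
  then have n1: "1 \<le> n" by simp
  define p where "p = length \<gamma>"
  have lb: "length \<beta> = p" unfolding p_def using anagram by (metis size_mset)
  define G where "G = psum \<gamma>"
  define B where "B = psum \<beta>"
  have PU: "1 \<le> p" "G 0 = 0" "G p = n" "\<forall>i j. i < j \<and> j \<le> p \<longrightarrow> G i < G j"
    "\<forall>i\<in>{1..p}. \<forall>k. 1 \<le> k \<and> k < inv u (G (i-1)+1) \<longrightarrow> G i < u k"
    using perm_blocks[OF u n1] unfolding G_def p_def \<gamma>[symmetric] by auto
  have PW: "B 0 = 0" "B p = n" "\<forall>i j. i < j \<and> j \<le> p \<longrightarrow> B i < B j"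
    "\<forall>i\<in>{1..p}. \<forall>k. 1 \<le> k \<and> k < inv w (B (i-1)+1) \<longrightarrow> B i < w k"
    using perm_blocks[OF w n1] unfolding B_def lb[symmetric] \<beta>[symmetric] by auto
  note FU = first_pos[OF u PU(2,3,4,5)]
  note FW = first_pos[OF w PW(1,2,3,4)]
  have SG: "SetC \<gamma> i = {G (i-1)+1..G i}" for i unfolding SetC_def G_def ..
  have SB: "SetC \<beta> i = {B (i-1)+1..B i}" for i unfolding SetC_def B_def ..
  have chi: "\<chi> permutes {1..p}" using \<chi> lb by simp
  have chin: "\<chi> i \<in> {1..p}" if "i \<in> {1..p}" for i using permutes_in_image[OF chi] that by simp
  have vb: "v ` {G (i-1)+1..G i} = {B (\<chi> i-1)+1..B (\<chi> i)}" if "i \<in> {1..p}" for i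
    using v_blocks that lb SG SB by simp
  have wuv: "w k = v (u k)" for k using prod by auto
  define t where "t i = inv u (G (i-1)+1)" for i
  define s where "s i = inv w (B (i-1)+1)" for i
  have Gin: "G (i-1)+1 \<le> G i" if "i \<in> {1..p}" for i
    using PU(4)[rule_format, of "i-1" i] that by auto
  have Bin: "B (i-1)+1 \<le> B i" if "i \<in> {1..p}" for i
    using PW(3)[rule_format, of "i-1" i] that by auto
  have st: "s (\<chi> i) = t i" if i: "i \<in> {1..p}" for i
  proof -
    define c where "c = \<chi> i"
    have c: "c \<in> {1..p}" using chin[OF i] c_def by simp
    have tn: "t i \<in> {1..n}" "u (t i) = G (i-1)+1" using FU(1) i t_def by auto
    have sn: "s c \<in> {1..n}" "w (s c) = B (c-1)+1" using FW(1) c s_def by auto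
    have "u (t i) \<in> {G (i-1)+1..G i}" using tn Gin[OF i] by simp
    then have wt: "w (t i) \<in> {B (c-1)+1..B c}" using vb[OF i] wuv c_def by blast
    have n1: "\<not> t i < s c"
    proof
      assume "t i < s c"
      then have "B c < w (t i)" using PW(4) c tn s_def by auto
      then show False using wt by simp
    qed
    have n2: "\<not> s c < t i"
    proof
      assume "s c < t i"
      then have gu: "G i < u (s c)" using PU(5) i sn t_def by auto
      have "u (s c) \<in> {1..n}" using sn permutes_in_image[OF u] by simp
      then obtain j where j: "j \<in> {1..p}" "u (s c) \<in> {G (j-1)+1..G j}"
        using block_cover[OF PU(2,3,4)] by blast
      have ji: "j \<noteq> i" using j gu by auto
      have "w (s c) \<in> {B (\<chi> j-1)+1..B (\<chi> j)}" using vb[OF j(1)] j(2) wuv by blast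
      moreover have "w (s c) \<in> {B (c-1)+1..B c}" using sn Bin[OF c] by simp
      moreover have "\<chi> j \<noteq> c" using ji c_def permutes_inj[OF chi] by (metis inj_eq)
      ultimately show False using block_disj[OF PW(3) chin[OF j(1)] c] by blast
    qed
    show ?thesis using n1 n2 c_def by simp
  qed
  have inc: "\<forall>i\<in>{1..p}. \<forall>j\<in>{1..p}. i < j \<longrightarrow> \<chi> i < \<chi> j"
  proof (intro ballI impI)
    fix i j assume i: "i \<in> {1..p}" and j: "j \<in> {1..p}" and ij: "i < j"
    show "\<chi> i < \<chi> j"
    proof (rule ccontr)
      assume "\<not> ?thesis"
      moreover have "\<chi> i \<noteq> \<chi> j" using ij permutes_inj[OF chi] by (metis inj_eq less_irrefl)
      ultimately have "\<chi> j < \<chi> i" by simp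
      then have "s (\<chi> i) < s (\<chi> j)" using FW(2) chin[OF i] chin[OF j] s_def by auto
      then have "t i < t j" using st i j by simp
      moreover have "t j < t i" using FU(2) i j ij t_def by auto
      ultimately show False by simp
    qed
  qed
  have cid: "\<chi> = id" by (rule mono_perm_id[OF chi inc])
  have geq: "\<gamma> = \<beta>"
  proof (rule nth_equalityI)
    show "length \<gamma> = length \<beta>" using lb p_def by simp
    fix k assume "k < length \<gamma>"
    then have "Suc k \<in> {1..length \<beta>}" using lb p_def by simp
    then have "part \<beta> (Suc k) = part \<gamma> (Suc k)" using \<chi>_part cid by auto
    then show "\<gamma> ! k = \<beta> ! k" unfolding part_def by simp
  qed
  have BG: "B = G" unfolding B_def G_def geq ..
  have vid: "v = id"
  proof
    fix y
    show "v y = id y"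
    proof (cases "y \<in> {1..n}")
      case False then show ?thesis using permutes_not_in[OF v] by simp
    next
      case True
      then obtain i where i: "i \<in> {1..p}" "y \<in> {G (i-1)+1..G i}"
        using block_cover[OF PU(2,3,4)] by blast
      have img: "v ` {G (i-1)+1..G i} = {G (i-1)+1..G i}" using vb[OF i(1)] cid BG by simp
      have tn: "u (t i) = G (i-1)+1" using FU(1) i t_def by auto
      have sn: "w (s i) = B (i-1)+1" using FW(1) i s_def by auto
      have "v (G (i-1)+1) = G (i-1)+1"
        using wuv[of "t i"] tn sn st[OF i(1)] cid BG by simp
      moreover have "vshape v (G (i-1)+1) (G i)" using v_vshape i(1) lb G_def by simp
      ultimately show ?thesis
        using vshape_id[OF _ Gin[OF i(1)] img] i(2) by simp
    qed
  qed
  show ?thesis using cid vid geq by simp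
qed

end
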